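(* Let $k$ be a field and $\mathsf{E}$ a left strictly locally finite $k$-linear category. Then the essential image of the comodule inclusion functor $\Upsilon_{\mathsf{E}^{op}}$ from right $\mathcal{C}_\mathsf{E}$-comodules to right $\mathsf{E}$-modules is closed under extensions: if $0\to L\to M\to N\to0$ is a short exact sequence of right $\mathsf{E}$-modules and $L$ and $N$ are each isomorphic to $\Upsilon_{\mathsf{E}^{op}}$ of some right $\mathcal{C}_\mathsf{E}$-comodule, then so is $M$.
   Context: A small $k$-linear category $\mathsf{E}$ has $k$-vector spaces $\operatorname{Hom}_\mathsf{E}(x,y)$, $k$-bilinear associative composition and identities with $\mathrm{id}_x\ne0$. A right $\mathsf{E}$-module is a $k$-linear functor $N:\mathsf{E}^{op}\to k\text{-Vect}$ (action maps $\operatorname{Hom}_\mathsf{E}(x,y)\otimes_kN(y)\to N(x)$). Write $x\preceq y$ if there are $n\ge1$ and objects $x=z_0,\dots,z_n=y$ with $\operatorname{Hom}_\mathsf{E}(z_{i-1},z_i)\neq0$ for all $i$; $x\prec y$ means $x\preceq y$ and not $y\preceq x$. $\mathsf{E}$ is locally finite if all $\operatorname{Hom}_\mathsf{E}(x,y)$ are finite-dimensional and every $\{z:x\preceq z\preceq y\}$ is finite; left strictly locally finite if moreover for every $y$ there is a finite set $X_y$ of objects with $x\prec y$ for $x\in X_y$ such that every $f:z\to y$ with $z\prec y$ equals $\sum_{i=1}^nh_ig_i$ ($n\ge0$) with $g_i:z\to x_i$, $h_i:x_i\to y$, $x_i\in X_y$. $\mathcal{C}_\mathsf{E}=\bigoplus_{x,y}\mathcal{C}^{x,y}$,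 $\mathcal{C}^{x,y}=\operatorname{Hom}_\mathsf{E}(x,y)^*$; counit zero on $\mathcal{C}^{x,y}$ for $x\ne y$, evaluation at $\mathrm{id}_x$ on $\mathcal{C}^{x,x}$; comultiplication $\mathcal{C}^{x,y}\to\bigoplus_z\mathcal{C}^{x,z}\otimes\mathcal{C}^{z,y}$ dual to composition $g\otimes h\mapsto hg$. For a right comodule $(\mathcal{N},\nu:\mathcal{N}\to\mathcal{N}\otimes\mathcal{C}_\mathsf{E})$, $\varphi\cdot n=(\mathrm{id}\otimes\varphi)\nu(n)$. With $e_x$ evaluation at $\mathrm{id}_x$ on $\mathcal{C}^{x,x}$ (zero elsewhere) and $\mathrm{ev}_f$, for $f\in\operatorname{Hom}_\mathsf{E}(x,y)$, evaluation at $f$ on $\mathcal{C}^{x,y}$ (zero elsewhere): $\Upsilon_{\mathsf{E}^{op}}(\mathcal{N})(x)=e_x\cdot\mathcal{N}$ and $f$ acts $e_y\cdot\mathcal{N}\to e_x\cdot\mathcal{N}$ by $n\mapsto\mathrm{ev}_f\cdot n$. *)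

theory Defs
  imports Complex_Main "HOL-Library.Function_Algebras"
begin

text \<open>A k-linear category: objects are the elements of a type 'o; all
hom-spaces Hom x y are subspaces of one ambient k-vector space of type 'm (scalar
multiplication sE); composition is indexed by objects: cmp x y z h g is h g for
g : x -> y and h : y -> z; ide x is the identity of x.
Right E-modules: N(x) = Mc x, subspaces of an ambient k-vector space (scale sM),
action act x y f : N(y) -> N(x) for f in Hom x y.\<close>

definition lin_on :: "('k::field \<Rightarrow> 'a::ab_group_add \<Rightarrow> 'a) \<Rightarrow> ('k \<Rightarrow> 'b::ab_group_add \<Rightarrow> 'b)
    \<Rightarrow> 'a set \<Rightarrow> ('a \<Rightarrow> 'b) \<Rightarrow> bool" where
  "lin_on s1 s2 A f \<longleftrightarrow>
     (\<forall>a\<in>A. \<forall>b\<in>A. f (a + b) = f a + f b) \<and> (\<forall>c. \<forall>a\<in>A. f (s1 c a) = s2 c (f a))"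

definition klin_cat :: "('k::field \<Rightarrow> 'm::ab_group_add \<Rightarrow> 'm) \<Rightarrow> ('o \<Rightarrow> 'o \<Rightarrow> 'm set)
    \<Rightarrow> ('o \<Rightarrow> 'o \<Rightarrow> 'o \<Rightarrow> 'm \<Rightarrow> 'm \<Rightarrow> 'm) \<Rightarrow> ('o \<Rightarrow> 'm) \<Rightarrow> bool" where
  "klin_cat sE Hom cmp ide \<longleftrightarrow>
     vector_space sE \<and>
     (\<forall>x y. module.subspace sE (Hom x y)) \<and>
     (\<forall>x y z g h. g \<in> Hom x y \<longrightarrow> h \<in> Hom y z \<longrightarrow> cmp x y z h g \<in> Hom x z) \<and>
     (\<forall>x y z h. h \<in> Hom y z \<longrightarrow> lin_on sE sE (Hom x y) (cmp x y z h)) \<and>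
     (\<forall>x y z g. g \<in> Hom x y \<longrightarrow> lin_on sE sE (Hom y z) (\<lambda>h. cmp x y z h g)) \<and>
     (\<forall>w x y z f g h. f \<in> Hom w x \<longrightarrow> g \<in> Hom x y \<longrightarrow> h \<in> Hom y z \<longrightarrow>
        cmp w y z h (cmp w x y g f) = cmp w x z (cmp x y z h g) f) \<and>
     (\<forall>x. ide x \<in> Hom x x \<and> ide x \<noteq> 0) \<and>
     (\<forall>x y f. f \<in> Hom x y \<longrightarrow> cmp x x y f (ide x) = f \<and> cmp x y y (ide y) f = f)"

definition prec_eq :: "('o \<Rightarrow> 'o \<Rightarrow> 'm::zero set) \<Rightarrow> 'o \<Rightarrow> 'o \<Rightarrow> bool" where
  "prec_eq Hom x y \<longleftrightarrow> (x, y) \<in> {(a, b). Hom a b \<noteq> {0}}\<^sup>+"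

definition prec :: "('o \<Rightarrow> 'o \<Rightarrow> 'm::zero set) \<Rightarrow> 'o \<Rightarrow> 'o \<Rightarrow> bool" where
  "prec Hom x y \<longleftrightarrow> prec_eq Hom x y \<and> \<not> prec_eq Hom y x"

definition fin_dim :: "('k::field \<Rightarrow> 'm::ab_group_add \<Rightarrow> 'm) \<Rightarrow> 'm set \<Rightarrow> bool" where
  "fin_dim sE H \<longleftrightarrow> (\<exists>B. finite B \<and> B \<subseteq> H \<and> module.span sE B = H)"

definition locally_finite :: "('k::field \<Rightarrow> 'm::ab_group_add \<Rightarrow> 'm) \<Rightarrow> ('o \<Rightarrow> 'o \<Rightarrow> 'm set) \<Rightarrow> bool" where
  "locally_finite sE Hom \<longleftrightarrow>
     (\<forall>x y. fin_dim sE (Hom x y)) \<and>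
     (\<forall>x y. finite {z. prec_eq Hom x z \<and> prec_eq Hom z y})"

definition left_slf :: "('k::field \<Rightarrow> 'm::ab_group_add \<Rightarrow> 'm) \<Rightarrow> ('o \<Rightarrow> 'o \<Rightarrow> 'm set)
    \<Rightarrow> ('o \<Rightarrow> 'o \<Rightarrow> 'o \<Rightarrow> 'm \<Rightarrow> 'm \<Rightarrow> 'm) \<Rightarrow> bool" where
  "left_slf sE Hom cmp \<longleftrightarrow>
     locally_finite sE Hom \<and>
     (\<forall>y. \<exists>X. finite X \<and> (\<forall>x\<in>X. prec Hom x y) \<and>
        (\<forall>z f. prec Hom z y \<longrightarrow> f \<in> Hom z y \<longrightarrow>
           (\<exists>(n::nat) xs g h. (\<forall>i<n. xs i \<in> X \<and> g i \<in> Hom z (xs i) \<and> h i \<in> Hom (xs i) y) \<and>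
              f = (\<Sum>i<n. cmp z (xs i) y (h i) (g i)))))"

definition right_module :: "('k::field \<Rightarrow> 'm::ab_group_add \<Rightarrow> 'm) \<Rightarrow> ('o \<Rightarrow> 'o \<Rightarrow> 'm set)
    \<Rightarrow> ('o \<Rightarrow> 'o \<Rightarrow> 'o \<Rightarrow> 'm \<Rightarrow> 'm \<Rightarrow> 'm) \<Rightarrow> ('o \<Rightarrow> 'm)
    \<Rightarrow> ('k \<Rightarrow> 'v::ab_group_add \<Rightarrow> 'v) \<Rightarrow> ('o \<Rightarrow> 'v set) \<Rightarrow> ('o \<Rightarrow> 'o \<Rightarrow> 'm \<Rightarrow> 'v \<Rightarrow> 'v) \<Rightarrow> bool" where
  "right_module sE Hom cmp ide sM Mc act \<longleftrightarrow>
     vector_space sM \<and>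
     (\<forall>x. module.subspace sM (Mc x)) \<and>
     (\<forall>x y f m. f \<in> Hom x y \<longrightarrow> m \<in> Mc y \<longrightarrow> act x y f m \<in> Mc x) \<and>
     (\<forall>x y f. f \<in> Hom x y \<longrightarrow> lin_on sM sM (Mc y) (act x y f)) \<and>
     (\<forall>x y m. m \<in> Mc y \<longrightarrow> lin_on sE sM (Hom x y) (\<lambda>f. act x y f m)) \<and>
     (\<forall>x m. m \<in> Mc x \<longrightarrow> act x x (ide x) m = m) \<and>
     (\<forall>x y z g h m. g \<in> Hom x y \<longrightarrow> h \<in> Hom y z \<longrightarrow> m \<in> Mc z \<longrightarrow>
        act x z (cmp x y z h g) m = act x y g (act y z h m))"

definition mod_hom :: "('o \<Rightarrow> 'o \<Rightarrow> 'm set)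
    \<Rightarrow> ('k::field \<Rightarrow> 'a::ab_group_add \<Rightarrow> 'a) \<Rightarrow> ('o \<Rightarrow> 'a set) \<Rightarrow> ('o \<Rightarrow> 'o \<Rightarrow> 'm \<Rightarrow> 'a \<Rightarrow> 'a)
    \<Rightarrow> ('k \<Rightarrow> 'b::ab_group_add \<Rightarrow> 'b) \<Rightarrow> ('o \<Rightarrow> 'b set) \<Rightarrow> ('o \<Rightarrow> 'o \<Rightarrow> 'm \<Rightarrow> 'b \<Rightarrow> 'b)
    \<Rightarrow> ('o \<Rightarrow> 'a \<Rightarrow> 'b) \<Rightarrow> bool" where
  "mod_hom Hom sA Ac actA sB Bc actB \<phi> \<longleftrightarrow>
     (\<forall>x. \<phi> x ` Ac x \<subseteq> Bc x \<and> lin_on sA sB (Ac x) (\<phi> x)) \<and>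
     (\<forall>x y f m. f \<in> Hom x y \<longrightarrow> m \<in> Ac y \<longrightarrow> \<phi> x (actA x y f m) = actB x y f (\<phi> y m))"

definition mod_iso :: "('o \<Rightarrow> 'o \<Rightarrow> 'm set)
    \<Rightarrow> ('k::field \<Rightarrow> 'a::ab_group_add \<Rightarrow> 'a) \<Rightarrow> ('o \<Rightarrow> 'a set) \<Rightarrow> ('o \<Rightarrow> 'o \<Rightarrow> 'm \<Rightarrow> 'a \<Rightarrow> 'a)
    \<Rightarrow> ('k \<Rightarrow> 'b::ab_group_add \<Rightarrow> 'b) \<Rightarrow> ('o \<Rightarrow> 'b set) \<Rightarrow> ('o \<Rightarrow> 'o \<Rightarrow> 'm \<Rightarrow> 'b \<Rightarrow> 'b)
    \<Rightarrow> ('o \<Rightarrow> 'a \<Rightarrow> 'b) \<Rightarrow> bool" where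
  "mod_iso Hom sA Ac actA sB Bc actB \<phi> \<longleftrightarrow>
     mod_hom Hom sA Ac actA sB Bc actB \<phi> \<and> (\<forall>x. bij_betw (\<phi> x) (Ac x) (Bc x))"

definition short_exact :: "('o \<Rightarrow> 'o \<Rightarrow> 'm set)
    \<Rightarrow> ('k::field \<Rightarrow> 'l::ab_group_add \<Rightarrow> 'l) \<Rightarrow> ('o \<Rightarrow> 'l set) \<Rightarrow> ('o \<Rightarrow> 'o \<Rightarrow> 'm \<Rightarrow> 'l \<Rightarrow> 'l)
    \<Rightarrow> ('k \<Rightarrow> 'v::ab_group_add \<Rightarrow> 'v) \<Rightarrow> ('o \<Rightarrow> 'v set) \<Rightarrow> ('o \<Rightarrow> 'o \<Rightarrow> 'm \<Rightarrow> 'v \<Rightarrow> 'v)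
    \<Rightarrow> ('k \<Rightarrow> 'n::ab_group_add \<Rightarrow> 'n) \<Rightarrow> ('o \<Rightarrow> 'n set) \<Rightarrow> ('o \<Rightarrow> 'o \<Rightarrow> 'm \<Rightarrow> 'n \<Rightarrow> 'n)
    \<Rightarrow> ('o \<Rightarrow> 'l \<Rightarrow> 'v) \<Rightarrow> ('o \<Rightarrow> 'v \<Rightarrow> 'n) \<Rightarrow> bool" where
  "short_exact Hom sL Lc actL sM Mc actM sN Nc actN \<alpha> \<beta> \<longleftrightarrow>
     mod_hom Hom sL Lc actL sM Mc actM \<alpha> \<and> mod_hom Hom sM Mc actM sN Nc actN \<beta> \<and>
     (\<forall>x. inj_on (\<alpha> x) (Lc x) \<and> \<beta> x ` Mc x = Nc x \<and> \<alpha> x ` Lc x = {m \<in> Mc x. \<beta> x m = 0})"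

text \<open>Since every Hom x y is finite-dimensional, an element of
N \<otimes> C_E = \<Oplus>_{x,y} N \<otimes> Hom(x,y)^* is the same as a finitely supported family of linear
maps Hom(x,y) -> N (canonical isomorphism N \<otimes> V^* = Hom_k(V,N) for finite-dim V).
We encode the coaction nu by coact n x y : Hom x y -> N, i.e. coact n x y f = ev_f . n.
Counit axiom (id \<otimes> \<epsilon>) nu = id and coassociativity (nu \<otimes> id) nu = (id \<otimes> \<Delta>) nu
are written out under this identification.\<close>

definition right_comodule :: "('k::field \<Rightarrow> 'm::ab_group_add \<Rightarrow> 'm) \<Rightarrow> ('o \<Rightarrow> 'o \<Rightarrow> 'm set)
    \<Rightarrow> ('o \<Rightarrow> 'o \<Rightarrow> 'o \<Rightarrow> 'm \<Rightarrow> 'm \<Rightarrow> 'm) \<Rightarrow> ('o \<Rightarrow> 'm)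
    \<Rightarrow> ('k \<Rightarrow> 'c::ab_group_add \<Rightarrow> 'c) \<Rightarrow> 'c set \<Rightarrow> ('c \<Rightarrow> 'o \<Rightarrow> 'o \<Rightarrow> 'm \<Rightarrow> 'c) \<Rightarrow> bool" where
  "right_comodule sE Hom cmp ide sC Cc coact \<longleftrightarrow>
     vector_space sC \<and> module.subspace sC Cc \<and>
     (\<forall>n x y f. n \<in> Cc \<longrightarrow> f \<in> Hom x y \<longrightarrow> coact n x y f \<in> Cc) \<and>
     (\<forall>x y f. f \<in> Hom x y \<longrightarrow> lin_on sC sC Cc (\<lambda>n. coact n x y f)) \<and>
     (\<forall>n x y. n \<in> Cc \<longrightarrow> lin_on sE sC (Hom x y) (coact n x y)) \<and>
     (\<forall>n\<in>Cc. finite {(x, y). \<exists>f\<in>Hom x y. coact n x y f \<noteq> 0}) \<and>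
     (\<forall>n\<in>Cc. n = (\<Sum>x\<in>{x. coact n x x (ide x) \<noteq> 0}. coact n x x (ide x))) \<and>
     (\<forall>n\<in>Cc. \<forall>x z z' y g h. g \<in> Hom x z \<longrightarrow> h \<in> Hom z' y \<longrightarrow>
        coact (coact n z' y h) x z g = (if z = z' then coact n x y (cmp x z y h g) else 0))"

text \<open>The functor Upsilon: Upsilon(N)(x) = e_x . N and f : x -> y acts by n |-> ev_f . n.\<close>

definition ups_car :: "'c set \<Rightarrow> ('c \<Rightarrow> 'o \<Rightarrow> 'o \<Rightarrow> 'm \<Rightarrow> 'c) \<Rightarrow> ('o \<Rightarrow> 'm) \<Rightarrow> 'o \<Rightarrow> 'c set" where
  "ups_car Cc coact ide x = (\<lambda>n. coact n x x (ide x)) ` Cc"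

definition ups_act :: "('c \<Rightarrow> 'o \<Rightarrow> 'o \<Rightarrow> 'm \<Rightarrow> 'c) \<Rightarrow> 'o \<Rightarrow> 'o \<Rightarrow> 'm \<Rightarrow> 'c \<Rightarrow> 'c" where
  "ups_act coact x y f n = coact n x y f"

text \<open>Membership in the essential image of Upsilon, with the comodule carried by the
type 'c (given by the TYPE argument).\<close>

definition in_ess_image :: "'c::ab_group_add itself \<Rightarrow> ('k::field \<Rightarrow> 'm::ab_group_add \<Rightarrow> 'm)
    \<Rightarrow> ('o \<Rightarrow> 'o \<Rightarrow> 'm set) \<Rightarrow> ('o \<Rightarrow> 'o \<Rightarrow> 'o \<Rightarrow> 'm \<Rightarrow> 'm \<Rightarrow> 'm) \<Rightarrow> ('o \<Rightarrow> 'm)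
    \<Rightarrow> ('k \<Rightarrow> 'v::ab_group_add \<Rightarrow> 'v) \<Rightarrow> ('o \<Rightarrow> 'v set) \<Rightarrow> ('o \<Rightarrow> 'o \<Rightarrow> 'm \<Rightarrow> 'v \<Rightarrow> 'v) \<Rightarrow> bool" where
  "in_ess_image _ sE Hom cmp ide sM Mc act \<longleftrightarrow>
     (\<exists>(sC :: 'k \<Rightarrow> 'c \<Rightarrow> 'c) Cc coact.
        right_comodule sE Hom cmp ide sC Cc coact \<and>
        (\<exists>\<phi>. mod_iso Hom sM Mc act sC (ups_car Cc coact ide) (ups_act coact) \<phi>))"

end

theory Submission
  imports Defs
begin

definition supp :: "('o \<Rightarrow> 'o \<Rightarrow> 'm set) \<Rightarrow> ('o \<Rightarrow> 'o \<Rightarrow> 'm \<Rightarrow> 'v \<Rightarrow> 'v::zero) \<Rightarrow> 'o \<Rightarrow> 'v \<Rightarrow> 'o set" where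
  "supp Hom act x m = {z. \<exists>f\<in>Hom z x. act z x f m \<noteq> 0}"

definition locfin :: "('o \<Rightarrow> 'o \<Rightarrow> 'm set) \<Rightarrow> ('o \<Rightarrow> 'v::zero set) \<Rightarrow> ('o \<Rightarrow> 'o \<Rightarrow> 'm \<Rightarrow> 'v \<Rightarrow> 'v) \<Rightarrow> bool" where
  "locfin Hom Mc act \<longleftrightarrow> (\<forall>x. \<forall>m\<in>Mc x. finite (supp Hom act x m))"

lemma lin_zero:
  assumes "lin_on s1 s2 A f" "0 \<in> A" shows "f 0 = 0"
proof -
  have "f (0 + 0) = f 0 + f 0" using assms unfolding lin_on_def by blast
  then show ?thesis by simp
qed

lemma rm_facts:
  assumes km: "klin_cat sE Hom cmp ide" and rm: "right_module sE Hom cmp ide sM Mc act"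
  shows rm_vs: "vector_space sM"
    and rm_0: "0 \<in> Mc x"
    and rm_add: "a \<in> Mc x \<Longrightarrow> b \<in> Mc x \<Longrightarrow> a + b \<in> Mc x"
    and rm_scale: "a \<in> Mc x \<Longrightarrow> sM c a \<in> Mc x"
    and rm_in: "f \<in> Hom x y \<Longrightarrow> m \<in> Mc y \<Longrightarrow> act x y f m \<in> Mc x"
    and rm_act0: "f \<in> Hom x y \<Longrightarrow> act x y f 0 = 0"
    and rm_0act: "m \<in> Mc y \<Longrightarrow> act x y 0 m = 0"
    and rm_addm: "f \<in> Hom x y \<Longrightarrow> a \<in> Mc y \<Longrightarrow> b \<in> Mc y \<Longrightarrow> act x y f (a + b) = act x y f a + act x y f b"
    and rm_scalem: "f \<in> Hom x y \<Longrightarrow> a \<in> Mc y \<Longrightarrow> act x y f (sM c a) = sM c (act x y f a)"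
    and rm_addf: "f \<in> Hom x y \<Longrightarrow> g \<in> Hom x y \<Longrightarrow> m \<in> Mc y \<Longrightarrow> act x y (f + g) m = act x y f m + act x y g m"
    and rm_scalef: "f \<in> Hom x y \<Longrightarrow> m \<in> Mc y \<Longrightarrow> act x y (sE c f) m = sM c (act x y f m)"
    and rm_id: "m \<in> Mc x \<Longrightarrow> act x x (ide x) m = m"
    and rm_comp: "g \<in> Hom x y \<Longrightarrow> h \<in> Hom y z \<Longrightarrow> m \<in> Mc z \<Longrightarrow>
        act x z (cmp x y z h g) m = act x y g (act y z h m)"
    and rm_sM0: "sM c 0 = 0"
    and km_vs: "vector_space sE"
    and km_H0: "0 \<in> Hom x y"
    and km_Hadd: "f \<in> Hom x y \<Longrightarrow> g \<in> Hom x y \<Longrightarrow> f + g \<in> Hom x y"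
    and km_Hscale: "f \<in> Hom x y \<Longrightarrow> sE c f \<in> Hom x y"
    and km_cmp: "g \<in> Hom x y \<Longrightarrow> h \<in> Hom y z \<Longrightarrow> cmp x y z h g \<in> Hom x z"
    and km_ide: "ide x \<in> Hom x x" "ide x \<noteq> 0"
proof -
  show vs: "vector_space sM" using rm by (simp add: right_module_def)
  have sub: "module.subspace sM (Mc x)" for x using rm by (simp add: right_module_def)
  have mod: "module sM" using vs module_iff_vector_space by blast
  show "0 \<in> Mc x" using module.subspace_0[OF mod sub] .
  show "a \<in> Mc x \<Longrightarrow> b \<in> Mc x \<Longrightarrow> a + b \<in> Mc x" using module.subspace_add[OF mod sub] .
  show "a \<in> Mc x \<Longrightarrow> sM c a \<in> Mc x" using module.subspace_scale[OF mod sub] .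
  show "sM c 0 = 0" using module.scale_zero_right[OF mod] .
  show vsE: "vector_space sE" using km by (simp add: klin_cat_def)
  have subE: "module.subspace sE (Hom x y)" for x y using km unfolding klin_cat_def by simp
  have modE: "module sE" using vsE module_iff_vector_space by blast
  show H0: "0 \<in> Hom x y" using module.subspace_0[OF modE subE] .
  show "f \<in> Hom x y \<Longrightarrow> g \<in> Hom x y \<Longrightarrow> f + g \<in> Hom x y" using module.subspace_add[OF modE subE] .
  show "f \<in> Hom x y \<Longrightarrow> sE c f \<in> Hom x y" using module.subspace_scale[OF modE subE] .
  show "g \<in> Hom x y \<Longrightarrow> h \<in> Hom y z \<Longrightarrow> cmp x y z h g \<in> Hom x z" using km by (simp add: klin_cat_def)
  show "ide x \<in> Hom x x" "ide x \<noteq> 0" using km by (simp add: klin_cat_def)+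
  show "f \<in> Hom x y \<Longrightarrow> m \<in> Mc y \<Longrightarrow> act x y f m \<in> Mc x" using rm by (simp add: right_module_def)
  show "f \<in> Hom x y \<Longrightarrow> act x y f 0 = 0"
    using rm lin_zero[of sM sM "Mc y" "act x y f"] module.subspace_0[OF mod sub] unfolding right_module_def by blast
  show "m \<in> Mc y \<Longrightarrow> act x y 0 m = 0"
    using rm lin_zero[of sE sM "Hom x y" "\<lambda>f. act x y f m"] H0 unfolding right_module_def by blast
  show "f \<in> Hom x y \<Longrightarrow> a \<in> Mc y \<Longrightarrow> b \<in> Mc y \<Longrightarrow> act x y f (a + b) = act x y f a + act x y f b"
    using rm by (simp add: right_module_def lin_on_def)
  show "f \<in> Hom x y \<Longrightarrow> a \<in> Mc y \<Longrightarrow> act x y f (sM c a) = sM c (act x y f a)"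
    using rm by (simp add: right_module_def lin_on_def)
  show "f \<in> Hom x y \<Longrightarrow> g \<in> Hom x y \<Longrightarrow> m \<in> Mc y \<Longrightarrow> act x y (f + g) m = act x y f m + act x y g m"
    using rm by (simp add: right_module_def lin_on_def)
  show "f \<in> Hom x y \<Longrightarrow> m \<in> Mc y \<Longrightarrow> act x y (sE c f) m = sM c (act x y f m)"
    using rm by (simp add: right_module_def lin_on_def)
  show "m \<in> Mc x \<Longrightarrow> act x x (ide x) m = m" using rm by (simp add: right_module_def)
  show "g \<in> Hom x y \<Longrightarrow> h \<in> Hom y z \<Longrightarrow> m \<in> Mc z \<Longrightarrow>
        act x z (cmp x y z h g) m = act x y g (act y z h m)" using rm by (simp add: right_module_def)
qed

lemma ess_locfin:
  fixes sE :: "'k::field \<Rightarrow> 'm::ab_group_add \<Rightarrow> 'm" and sM :: "'k \<Rightarrow> 'v::ab_group_add \<Rightarrow> 'v"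
  assumes km: "klin_cat sE Hom cmp ide" and rm: "right_module sE Hom cmp ide sM Mc act"
    and ei: "in_ess_image TYPE('c::ab_group_add) sE Hom cmp ide sM Mc act"
  shows "locfin Hom Mc act"
proof -
  obtain sC :: "'k \<Rightarrow> 'c \<Rightarrow> 'c" and Cc coact \<phi> where
    cm: "right_comodule sE Hom cmp ide sC Cc coact" and
    iso: "mod_iso Hom sM Mc act sC (ups_car Cc coact ide) (ups_act coact) \<phi>"
    using ei unfolding in_ess_image_def by blast
  have isoin: "\<And>x m. m \<in> Mc x \<Longrightarrow> \<phi> x m \<in> ups_car Cc coact ide x"
    using iso unfolding mod_iso_def mod_hom_def by (meson image_subset_iff)
  have isolin: "\<And>x. lin_on sM sC (Mc x) (\<phi> x)" using iso by (simp add: mod_iso_def mod_hom_def)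
  have isoinj: "\<And>x. inj_on (\<phi> x) (Mc x)" using iso by (simp add: mod_iso_def bij_betw_def)
  have isoact: "\<And>x y f m. f \<in> Hom x y \<Longrightarrow> m \<in> Mc y \<Longrightarrow> \<phi> x (act x y f m) = coact (\<phi> y m) x y f"
    using iso by (simp add: mod_iso_def mod_hom_def ups_act_def)
  have cmcl: "\<And>n x y f. n \<in> Cc \<Longrightarrow> f \<in> Hom x y \<Longrightarrow> coact n x y f \<in> Cc"
    using cm by (simp add: right_comodule_def)
  have cmfin: "\<And>n. n \<in> Cc \<Longrightarrow> finite {(x, y). \<exists>f\<in>Hom x y. coact n x y f \<noteq> 0}"
    using cm by (simp add: right_comodule_def)
  show ?thesis unfolding locfin_def
  proof (intro allI ballI)
    fix y m assume m: "m \<in> Mc y"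
    have "\<phi> y m \<in> ups_car Cc coact ide y" using isoin m .
    then obtain n where n: "n \<in> Cc" and pn: "\<phi> y m = coact n y y (ide y)" unfolding ups_car_def by (meson imageE)
    have c: "\<phi> y m \<in> Cc" using cmcl[OF n km_ide(1)[OF km rm]] pn by simp
    have fin: "finite {(x, y'). \<exists>f\<in>Hom x y'. coact (\<phi> y m) x y' f \<noteq> 0}"
      using cmfin[OF c] .
    have "supp Hom act y m \<subseteq> fst ` {(x, y'). \<exists>f\<in>Hom x y'. coact (\<phi> y m) x y' f \<noteq> 0}"
    proof
      fix z assume "z \<in> supp Hom act y m"
      then obtain f where f: "f \<in> Hom z y" and nz: "act z y f m \<noteq> 0" by (auto simp: supp_def)
      have inz: "act z y f m \<in> Mc z" using rm_in[OF km rm f m] .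
      have p0: "\<phi> z 0 = 0" using lin_zero[OF isolin rm_0[OF km rm]] .
      have "\<phi> z (act z y f m) \<noteq> 0"
      proof
        assume "\<phi> z (act z y f m) = 0"
        then have "\<phi> z (act z y f m) = \<phi> z 0" using p0 by simp
        then have "act z y f m = 0" by (rule inj_onD[OF isoinj _ inz rm_0[OF km rm]])
        then show False using nz by simp
      qed
      then have "coact (\<phi> y m) z y f \<noteq> 0" using isoact[OF f m] by simp
      then have zin: "(z, y) \<in> {(x, y'). \<exists>f\<in>Hom x y'. coact (\<phi> y m) x y' f \<noteq> 0}" using f by blast
      have "z = fst (z, y)" by simp
      then show "z \<in> fst ` {(x, y'). \<exists>f\<in>Hom x y'. coact (\<phi> y m) x y' f \<noteq> 0}"
        using zin by (rule image_eqI)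
    qed
    then show "finite (supp Hom act y m)" by (rule finite_subset[OF _ finite_imageI[OF fin]])
  qed
qed

lemma sum_fun_apply: "finite S \<Longrightarrow> (\<Sum>x\<in>S. F x) (z::'a) = (\<Sum>x\<in>S. F x z)"
  by (induction S rule: finite_induct) auto

definition dl :: "'o \<Rightarrow> 'v::zero \<Rightarrow> 'o \<Rightarrow> 'v" where
  "dl x v = (\<lambda>z. if z = x then v else 0)"

lemma dl_eq0[simp]: "dl x v = 0 \<longleftrightarrow> v = 0"
  by (auto simp: dl_def fun_eq_iff)

lemma dl_inj[simp]: "dl x v = dl x w \<longleftrightarrow> v = w"
  by (auto simp: dl_def fun_eq_iff)

lemma dl_apply: "dl x v x = v" by (simp add: dl_def)

lemma vs_fun:
  assumes "vector_space (sM :: 'k::field \<Rightarrow> 'v::ab_group_add \<Rightarrow> 'v)"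
  shows "vector_space (\<lambda>c (n::'o \<Rightarrow> 'v) z. sM c (n z))"
proof -
  have m: "module sM" using assms module_iff_vector_space by blast
  show ?thesis unfolding vector_space_def
    by (simp add: fun_eq_iff module.scale_right_distrib[OF m] module.scale_left_distrib[OF m]
        module.scale_scale[OF m] module.scale_one[OF m])
qed

lemma locfin_ess:
  fixes sE :: "'k::field \<Rightarrow> 'm::ab_group_add \<Rightarrow> 'm" and sM :: "'k \<Rightarrow> 'v::ab_group_add \<Rightarrow> 'v"
    and Hom :: "'o \<Rightarrow> 'o \<Rightarrow> 'm set"
  assumes km: "klin_cat sE Hom cmp ide" and rm: "right_module sE Hom cmp ide sM Mc act"
    and lf: "locfin Hom Mc act"
  shows "in_ess_image TYPE('o \<Rightarrow> 'v) sE Hom cmp ide sM Mc act"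
proof -
  define sC :: "'k \<Rightarrow> ('o \<Rightarrow> 'v) \<Rightarrow> ('o \<Rightarrow> 'v)" where "sC = (\<lambda>c n z. sM c (n z))"
  define Cc where "Cc = {n. (\<forall>z. n z \<in> Mc z) \<and> finite {z. n z \<noteq> 0}}"
  define coact where "coact = (\<lambda>n x y f. dl x (act x y f (n y)))"
  define \<phi> where "\<phi> = (\<lambda>(x::'o) (m::'v). dl x m)"
  note R = rm_facts[OF km rm]
  have vsC: "vector_space sC" unfolding sC_def using vs_fun[OF R(1)] .
  have mC: "module sC" using vsC module_iff_vector_space by blast
  have dlin: "dl x v \<in> Cc" if "v \<in> Mc x" for x v
    using that R(2) by (auto simp: Cc_def dl_def)
  have subC: "module.subspace sC Cc"
  proof -
    have "0 \<in> Cc" using R(2) by (simp add: Cc_def)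
    moreover have "a + b \<in> Cc" if "a \<in> Cc" "b \<in> Cc" for a b
    proof -
      have "{z. (a + b) z \<noteq> 0} \<subseteq> {z. a z \<noteq> 0} \<union> {z. b z \<noteq> 0}" by auto
      then show ?thesis using that R(3) unfolding Cc_def by (auto intro: finite_subset)
    qed
    moreover have "sC c a \<in> Cc" if "a \<in> Cc" for a c
    proof -
      have "{z. sC c a z \<noteq> 0} \<subseteq> {z. a z \<noteq> 0}" using R(14) by (auto simp: sC_def)
      then show ?thesis using that R(4) unfolding Cc_def by (auto intro: finite_subset simp: sC_def)
    qed
    ultimately show ?thesis by (simp add: module.subspace_def[OF mC])
  qed
  have cm: "right_comodule sE Hom cmp ide sC Cc coact"
    unfolding right_comodule_def
  proof (intro conjI allI impI ballI)
    show "vector_space sC" by (rule vsC)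
    show "module.subspace sC Cc" by (rule subC)
    show "coact n x y f \<in> Cc" if "n \<in> Cc" "f \<in> Hom x y" for n x y f
      unfolding coact_def using that by (intro dlin R(5)) (auto simp: Cc_def)
    show "lin_on sC sC Cc (\<lambda>n. coact n x y f)" if "f \<in> Hom x y" for x y f
      unfolding lin_on_def coact_def
      using that R(8,9,14) by (auto simp: Cc_def sC_def dl_def fun_eq_iff)
    show "lin_on sE sC (Hom x y) (coact n x y)" if "n \<in> Cc" for n x y
      unfolding lin_on_def coact_def
      using that R(10,11,14) by (auto simp: Cc_def sC_def dl_def fun_eq_iff)
    show "finite {(x, y). \<exists>f\<in>Hom x y. coact n x y f \<noteq> 0}" if n: "n \<in> Cc" for n
    proof -
      have "{(x, y). \<exists>f\<in>Hom x y. coact n x y f \<noteq> 0} \<subseteq>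
          (\<Union>y\<in>{z. n z \<noteq> 0}. supp Hom act y (n y) \<times> {y})"
      proof
        fix p assume "p \<in> {(x, y). \<exists>f\<in>Hom x y. coact n x y f \<noteq> 0}"
        then obtain x y f where p: "p = (x, y)" and f: "f \<in> Hom x y" and nz: "coact n x y f \<noteq> 0"
          by auto
        then have a: "act x y f (n y) \<noteq> 0" by (simp add: coact_def)
        then have ny: "n y \<noteq> 0" using R(6)[OF f] by auto
        have "x \<in> supp Hom act y (n y)" using f a by (auto simp: supp_def)
        then have "p \<in> supp Hom act y (n y) \<times> {y}" using p by simp
        then show "p \<in> (\<Union>y\<in>{z. n z \<noteq> 0}. supp Hom act y (n y) \<times> {y})" using ny by blast
      qed
      moreover have "finite (\<Union>y\<in>{z. n z \<noteq> 0}. supp Hom act y (n y) \<times> {y})"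
        using n lf unfolding Cc_def locfin_def by auto
      ultimately show ?thesis by (rule finite_subset)
    qed
    show "n = (\<Sum>x\<in>{x. coact n x x (ide x) \<noteq> 0}. coact n x x (ide x))" if n: "n \<in> Cc" for n
    proof -
      have e: "coact n x x (ide x) = dl x (n x)" for x
        using n R(12) by (simp add: coact_def Cc_def)
      have fin: "finite {x. n x \<noteq> 0}" using n by (simp add: Cc_def)
      show ?thesis
      proof (rule ext)
        fix z
        have "(\<Sum>x\<in>{x. coact n x x (ide x) \<noteq> 0}. coact n x x (ide x)) z
            = (\<Sum>x\<in>{x. n x \<noteq> 0}. dl x (n x) z)"
          using fin by (simp add: e sum_fun_apply)
        also have "\<dots> = (\<Sum>x\<in>{x. n x \<noteq> 0}. if x = z then n z else 0)"
          by (rule sum.cong) (auto simp: dl_def)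
        also have "\<dots> = n z" using fin by (simp add: sum.delta')
        finally show "n z = (\<Sum>x\<in>{x. coact n x x (ide x) \<noteq> 0}. coact n x x (ide x)) z" by simp
      qed
    qed
    show "coact (coact n z' y h) x z g = (if z = z' then coact n x y (cmp x z y h g) else 0)"
      if n: "n \<in> Cc" and g: "g \<in> Hom x z" and h: "h \<in> Hom z' y" for n x z z' y g h
    proof (cases "z = z'")
      case True
      have "n y \<in> Mc y" using n by (simp add: Cc_def)
      then show ?thesis using True g h R(13) by (simp add: coact_def dl_apply)
    next
      case False
      then show ?thesis using g R(6) by (simp add: coact_def dl_def fun_eq_iff)
    qed
  qed
  have car: "ups_car Cc coact ide x = dl x ` Mc x" for x
  proof
    show "ups_car Cc coact ide x \<subseteq> dl x ` Mc x"
      unfolding ups_car_def coact_def using R(5) R(20) by (auto simp: Cc_def)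
    show "dl x ` Mc x \<subseteq> ups_car Cc coact ide x"
    proof
      fix w assume "w \<in> dl x ` Mc x"
      then obtain v where v: "v \<in> Mc x" and w: "w = dl x v" by blast
      have "coact (dl x v) x x (ide x) = w" using v R(12) by (simp add: coact_def dl_apply w)
      then show "w \<in> ups_car Cc coact ide x" unfolding ups_car_def using dlin[OF v] by blast
    qed
  qed
  have iso: "mod_iso Hom sM Mc act sC (ups_car Cc coact ide) (ups_act coact) \<phi>"
    unfolding mod_iso_def mod_hom_def
  proof (intro conjI allI impI)
    show "\<phi> x ` Mc x \<subseteq> ups_car Cc coact ide x" for x by (simp add: car \<phi>_def)
    show "lin_on sM sC (Mc x) (\<phi> x)" for x
      using R(14) by (auto simp: lin_on_def \<phi>_def sC_def dl_def fun_eq_iff)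
    show "\<phi> x (act x y f m) = ups_act coact x y f (\<phi> y m)" if "f \<in> Hom x y" "m \<in> Mc y" for x y f m
      by (simp add: \<phi>_def ups_act_def coact_def dl_apply)
    show "bij_betw (\<phi> x) (Mc x) (ups_car Cc coact ide x)" for x
      by (simp add: car \<phi>_def bij_betw_def inj_on_def)
  qed
  show ?thesis unfolding in_ess_image_def using cm iso by blast
qed

lemma prec_eq_refl:
  assumes km: "klin_cat sE Hom cmp ide" shows "prec_eq Hom x x"
proof -
  have "ide x \<in> Hom x x" "ide x \<noteq> 0" using km by (simp_all add: klin_cat_def)
  then have "Hom x x \<noteq> {0}" by auto
  then show ?thesis unfolding prec_eq_def by (intro r_into_trancl) simp
qed

lemma prec_eq_trans: "prec_eq Hom x y \<Longrightarrow> prec_eq Hom y z \<Longrightarrow> prec_eq Hom x z"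
  unfolding prec_eq_def by (rule trancl_trans)

lemma supp_prec:
  assumes km: "klin_cat sE Hom cmp ide" and rm: "right_module sE Hom cmp ide sM Mc act"
    and m: "m \<in> Mc x" and z: "z \<in> supp Hom act x m"
  shows "prec_eq Hom z x"
proof -
  obtain f where f: "f \<in> Hom z x" and nz: "act z x f m \<noteq> 0" using z by (auto simp: supp_def)
  have "f \<noteq> 0" using nz rm_0act[OF km rm m] by auto
  then have "Hom z x \<noteq> {0}" using f by auto
  then show ?thesis unfolding prec_eq_def by (intro r_into_trancl) simp
qed

lemma supp_self:
  assumes km: "klin_cat sE Hom cmp ide" and rm: "right_module sE Hom cmp ide sM Mc act"
    and m: "m \<in> Mc x" and nz: "m \<noteq> 0"
  shows "x \<in> supp Hom act x m"
proof -
  have "act x x (ide x) m \<noteq> 0" using rm_id[OF km rm m] nz by simp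
  then show ?thesis unfolding supp_def using km_ide(1)[OF km rm] by blast
qed

lemma supp_act_sub:
  assumes km: "klin_cat sE Hom cmp ide" and rm: "right_module sE Hom cmp ide sM Mc act"
    and f: "f \<in> Hom x y" and m: "m \<in> Mc y"
  shows "supp Hom act x (act x y f m) \<subseteq> supp Hom act y m"
proof
  fix z assume "z \<in> supp Hom act x (act x y f m)"
  then obtain g where g: "g \<in> Hom z x" and nz: "act z x g (act x y f m) \<noteq> 0" by (auto simp: supp_def)
  have "act z y (cmp z x y f g) m = act z x g (act x y f m)" by (rule rm_comp[OF km rm g f m])
  then have "act z y (cmp z x y f g) m \<noteq> 0" using nz by simp
  then show "z \<in> supp Hom act y m" using km_cmp[OF km rm g f] unfolding supp_def by blast
qed

lemma supp_add:
  assumes km: "klin_cat sE Hom cmp ide" and rm: "right_module sE Hom cmp ide sM Mc act"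
    and a: "a \<in> Mc x" and b: "b \<in> Mc x"
  shows "supp Hom act x (a + b) \<subseteq> supp Hom act x a \<union> supp Hom act x b"
  using rm_addm[OF km rm _ a b] by (auto simp: supp_def)

lemma supp_scale:
  assumes km: "klin_cat sE Hom cmp ide" and rm: "right_module sE Hom cmp ide sM Mc act"
    and a: "a \<in> Mc x"
  shows "supp Hom act x (sM c a) \<subseteq> supp Hom act x a"
proof
  fix z assume "z \<in> supp Hom act x (sM c a)"
  then obtain f where f: "f \<in> Hom z x" and nz: "act z x f (sM c a) \<noteq> 0" by (auto simp: supp_def)
  have "act z x f a \<noteq> 0" using nz rm_scalem[OF km rm f a] rm_sM0[OF km rm] by auto
  then show "z \<in> supp Hom act x a" using f unfolding supp_def by blast
qed

lemma supp_zero: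
  assumes km: "klin_cat sE Hom cmp ide" and rm: "right_module sE Hom cmp ide sM Mc act"
  shows "supp Hom act x 0 = {}"
  using rm_act0[OF km rm] by (auto simp: supp_def)

lemma supp_span:
  assumes km: "klin_cat sE Hom cmp ide" and rm: "right_module sE Hom cmp ide sM Mc act"
    and B: "B \<subseteq> Hom x' x" and w: "w \<in> Mc x" and h: "h \<in> module.span sE B"
  shows "supp Hom act x' (act x' x h w) \<subseteq> (\<Union>b\<in>B. supp Hom act x' (act x' x b w))"
proof -
  let ?U = "(\<Union>b\<in>B. supp Hom act x' (act x' x b w))"
  have mE: "module sE" using km_vs[OF km rm] module_iff_vector_space by blast
  define P where "P = (\<lambda>h. h \<in> Hom x' x \<and> supp Hom act x' (act x' x h w) \<subseteq> ?U)"
  have sub: "module.subspace sE (Collect P)"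
    unfolding module.subspace_def[OF mE]
  proof (intro conjI ballI allI)
    have "0 \<in> Hom x' x" by (rule km_H0[OF km rm])
    moreover have "supp Hom act x' (act x' x 0 w) \<subseteq> ?U"
      using rm_0act[OF km rm w] supp_zero[OF km rm] by simp
    ultimately show "0 \<in> Collect P" by (simp add: P_def)
  next
    fix a b assume "a \<in> Collect P" "b \<in> Collect P"
    then have a: "a \<in> Hom x' x" "supp Hom act x' (act x' x a w) \<subseteq> ?U"
        and b: "b \<in> Hom x' x" "supp Hom act x' (act x' x b w) \<subseteq> ?U" by (simp_all add: P_def)
    have "a + b \<in> Hom x' x" using km_Hadd[OF km rm a(1) b(1)] .
    moreover have "supp Hom act x' (act x' x (a + b) w) \<subseteq> supp Hom act x' (act x' x a w) \<union> supp Hom act x' (act x' x b w)"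
      using rm_addf[OF km rm a(1) b(1) w] supp_add[OF km rm rm_in[OF km rm a(1) w] rm_in[OF km rm b(1) w]]
      by simp
    ultimately show "a + b \<in> Collect P" using a(2) b(2) by (auto simp: P_def)
  next
    fix c a assume "a \<in> Collect P"
    then have a: "a \<in> Hom x' x" "supp Hom act x' (act x' x a w) \<subseteq> ?U" by (simp_all add: P_def)
    have "sE c a \<in> Hom x' x" using km_Hscale[OF km rm a(1)] .
    moreover have "supp Hom act x' (act x' x (sE c a) w) \<subseteq> supp Hom act x' (act x' x a w)"
      using rm_scalef[OF km rm a(1) w] supp_scale[OF km rm rm_in[OF km rm a(1) w]] by simp
    ultimately show "sE c a \<in> Collect P" using a(2) by (auto simp: P_def)
  qed
  have base: "P b" if "b \<in> B" for b
    using that B unfolding P_def by blast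
  have "P h" by (rule module.span_induct[OF mE h sub base])
  then show ?thesis by (simp add: P_def)
qed

lemma act_sum:
  fixes n :: nat
  assumes km: "klin_cat sE Hom cmp ide" and rm: "right_module sE Hom cmp ide sM Mc act"
    and w: "w \<in> Mc x"
  shows "(\<forall>i<n. F i \<in> Hom z x) \<Longrightarrow> (\<Sum>i<n. F i) \<in> Hom z x \<and> act z x (\<Sum>i<n. F i) w = (\<Sum>i<n. act z x (F i) w)"
proof (induction n)
  case 0
  then show ?case using km_H0[OF km rm] rm_0act[OF km rm w] by simp
next
  case (Suc n)
  then have IH: "(\<Sum>i<n. F i) \<in> Hom z x" "act z x (\<Sum>i<n. F i) w = (\<Sum>i<n. act z x (F i) w)"
    and Fn: "F n \<in> Hom z x" by auto
  show ?case using km_Hadd[OF km rm IH(1) Fn] rm_addf[OF km rm IH(1) Fn w] IH(2) by simp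
qed

lemma ext_locfin:
  fixes sE :: "'k::field \<Rightarrow> 'm::ab_group_add \<Rightarrow> 'm"
    and Hom :: "'o \<Rightarrow> 'o \<Rightarrow> 'm set"
    and sL :: "'k \<Rightarrow> 'l::ab_group_add \<Rightarrow> 'l"
    and sM :: "'k \<Rightarrow> 'v::ab_group_add \<Rightarrow> 'v"
    and sN :: "'k \<Rightarrow> 'n::ab_group_add \<Rightarrow> 'n"
  assumes km: "klin_cat sE Hom cmp ide"
    and slf: "left_slf sE Hom cmp"
    and rL: "right_module sE Hom cmp ide sL Lc actL"
    and rM: "right_module sE Hom cmp ide sM Mc actM"
    and rN: "right_module sE Hom cmp ide sN Nc actN"
    and se: "short_exact Hom sL Lc actL sM Mc actM sN Nc actN \<alpha> \<beta>"
    and lfL: "locfin Hom Lc actL" and lfN: "locfin Hom Nc actN"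
  shows "locfin Hom Mc actM"
proof -
  have lf: "locally_finite sE Hom" using slf by (simp add: left_slf_def)
  have intfin: "finite {z. prec_eq Hom x z \<and> prec_eq Hom z y}" for x y
    using lf by (simp add: locally_finite_def)
  have fd: "fin_dim sE (Hom x y)" for x y using lf by (simp add: locally_finite_def)
  have slf2: "\<exists>X. finite X \<and> (\<forall>x\<in>X. prec Hom x y) \<and>
        (\<forall>z f. prec Hom z y \<longrightarrow> f \<in> Hom z y \<longrightarrow>
           (\<exists>(n::nat) xs g h. (\<forall>i<n. xs i \<in> X \<and> g i \<in> Hom z (xs i) \<and> h i \<in> Hom (xs i) y) \<and>
              f = (\<Sum>i<n. cmp z (xs i) y (h i) (g i))))" for y
    using slf by (simp add: left_slf_def)
  have \<alpha>act: "\<And>x y f l. f \<in> Hom x y \<Longrightarrow> l \<in> Lc y \<Longrightarrow> \<alpha> x (actL x y f l) = actM x y f (\<alpha> y l)"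
    using se by (simp add: short_exact_def mod_hom_def)
  have \<alpha>lin: "\<And>x. lin_on sL sM (Lc x) (\<alpha> x)"
    using se by (simp add: short_exact_def mod_hom_def)
  have \<alpha>inj: "\<And>x. inj_on (\<alpha> x) (Lc x)" using se by (simp add: short_exact_def)
  have \<beta>act: "\<And>x y f m. f \<in> Hom x y \<Longrightarrow> m \<in> Mc y \<Longrightarrow> \<beta> x (actM x y f m) = actN x y f (\<beta> y m)"
    using se by (simp add: short_exact_def mod_hom_def)
  have \<beta>in: "\<And>x m. m \<in> Mc x \<Longrightarrow> \<beta> x m \<in> Nc x"
    using se unfolding short_exact_def by blast
  have ker: "\<And>x. \<alpha> x ` Lc x = {m \<in> Mc x. \<beta> x m = 0}" using se by (simp add: short_exact_def)
  have \<alpha>0: "\<alpha> x 0 = 0" for x using lin_zero[OF \<alpha>lin rm_0[OF km rL]] .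
  have suppLM: "supp Hom actM x (\<alpha> x l) \<subseteq> supp Hom actL x l" if l: "l \<in> Lc x" for x l
  proof
    fix z assume "z \<in> supp Hom actM x (\<alpha> x l)"
    then obtain f where f: "f \<in> Hom z x" and nz: "actM z x f (\<alpha> x l) \<noteq> 0" by (auto simp: supp_def)
    have "\<alpha> z (actL z x f l) \<noteq> 0" using nz \<alpha>act[OF f l] by simp
    then have "actL z x f l \<noteq> 0" using \<alpha>0 by auto
    then show "z \<in> supp Hom actL x l" using f unfolding supp_def by blast
  qed
  show ?thesis unfolding locfin_def
  proof (intro allI ballI)
    fix y m assume m: "m \<in> Mc y"
    define T where "T = supp Hom actN y (\<beta> y m)"
    have Tfin: "finite T" using lfN \<beta>in[OF m] unfolding locfin_def T_def by blast
    define I where "I = {x. \<exists>t\<in>T. prec_eq Hom t x \<and> prec_eq Hom x y}"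
    have Ifin: "finite I"
    proof -
      have "I \<subseteq> (\<Union>t\<in>T. {z. prec_eq Hom t z \<and> prec_eq Hom z y})" unfolding I_def by blast
      then show ?thesis using Tfin intfin by (auto intro: finite_subset)
    qed
    define \<mu> where "\<mu> x = card {v\<in>I. prec_eq Hom v x}" for x
    have claim: "\<And>x w. \<mu> x = k \<Longrightarrow> prec_eq Hom x y \<Longrightarrow> w \<in> Mc x \<Longrightarrow>
        supp Hom actN x (\<beta> x w) \<subseteq> T \<Longrightarrow> finite (supp Hom actM x w)" for k
    proof (induction k rule: less_induct)
      case (less k x w)
      show ?case
      proof (cases "\<beta> x w = 0")
        case True
        then have "w \<in> \<alpha> x ` Lc x" using ker less.prems(3) by auto
        then obtain l where l: "l \<in> Lc x" and wl: "w = \<alpha> x l" by blast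
        have "finite (supp Hom actL x l)" using lfL l unfolding locfin_def by blast
        then show ?thesis using suppLM[OF l] wl finite_subset by metis
      next
        case False
        have xT: "x \<in> T" using supp_self[OF km rN \<beta>in[OF less.prems(3)] False] less.prems(4) by blast
        have xI: "x \<in> I" unfolding I_def using xT prec_eq_refl[OF km] less.prems(2) by blast
        obtain X where Xfin: "finite X" and Xprec: "\<forall>x'\<in>X. prec Hom x' x"
          and dec: "\<And>z f. prec Hom z x \<Longrightarrow> f \<in> Hom z x \<Longrightarrow>
             (\<exists>(n::nat) xs g h. (\<forall>i<n. xs i \<in> X \<and> g i \<in> Hom z (xs i) \<and> h i \<in> Hom (xs i) x) \<and>
              f = (\<Sum>i<n. cmp z (xs i) x (h i) (g i)))"
          using slf2[of x] by blast
        have "\<forall>x'. \<exists>B. finite B \<and> B \<subseteq> Hom x' x \<and> module.span sE B = Hom x' x"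
          using fd unfolding fin_dim_def by blast
        then obtain B where Bfin: "\<And>x'. finite (B x')" and Bsub: "\<And>x'. B x' \<subseteq> Hom x' x"
          and Bspan: "\<And>x'. module.span sE (B x') = Hom x' x" by metis
        define U where "U = {z. prec_eq Hom x z \<and> prec_eq Hom z x} \<union>
            (\<Union>x'\<in>X. \<Union>b\<in>B x'. supp Hom actM x' (actM x' x b w))"
        have Ufin: "finite U"
        proof -
          have "finite (supp Hom actM x' (actM x' x b w))" if x': "x' \<in> X" and b: "b \<in> B x'" for x' b
          proof -
            have bH: "b \<in> Hom x' x" using Bsub[of x'] b by (rule subsetD)
            have px: "prec Hom x' x" using Xprec x' by (rule bspec)
            have pe: "prec_eq Hom x' x" "\<not> prec_eq Hom x x'" using px by (simp_all add: prec_def)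
            have A'sub: "{v\<in>I. prec_eq Hom v x'} \<subset> {v\<in>I. prec_eq Hom v x}"
            proof
              show "{v\<in>I. prec_eq Hom v x'} \<subseteq> {v\<in>I. prec_eq Hom v x}"
                using prec_eq_trans[OF _ pe(1)] by auto
              show "{v\<in>I. prec_eq Hom v x'} \<noteq> {v\<in>I. prec_eq Hom v x}"
              proof
                assume eq: "{v\<in>I. prec_eq Hom v x'} = {v\<in>I. prec_eq Hom v x}"
                have "x \<in> {v\<in>I. prec_eq Hom v x}" using xI prec_eq_refl[OF km] by simp
                then have "x \<in> {v\<in>I. prec_eq Hom v x'}" by (simp only: eq)
                then have "prec_eq Hom x x'" by simp
                then show False using pe(2) by simp
              qed
            qed
            have "\<mu> x' < \<mu> x" unfolding \<mu>_def
              by (rule psubset_card_mono[OF finite_subset[OF _ Ifin] A'sub]) (rule Collect_subset)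
            then have lt: "\<mu> x' < k" using less.prems(1) by simp
            have py: "prec_eq Hom x' y" using prec_eq_trans[OF pe(1) less.prems(2)] .
            have win: "actM x' x b w \<in> Mc x'" using rm_in[OF km rM bH less.prems(3)] .
            have "supp Hom actN x' (\<beta> x' (actM x' x b w)) = supp Hom actN x' (actN x' x b (\<beta> x w))"
              using \<beta>act[OF bH less.prems(3)] by simp
            also have "\<dots> \<subseteq> supp Hom actN x (\<beta> x w)"
              by (rule supp_act_sub[OF km rN bH \<beta>in[OF less.prems(3)]])
            finally have sT: "supp Hom actN x' (\<beta> x' (actM x' x b w)) \<subseteq> T" using less.prems(4) by (rule order_trans)
            show ?thesis using less.IH[OF lt refl py win sT] .
          qed
          moreover have "finite {z. prec_eq Hom x z \<and> prec_eq Hom z x}" by (rule intfin)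
          ultimately show ?thesis unfolding U_def using Xfin Bfin by (intro finite_UnI finite_UN_I) auto
        qed
        have "supp Hom actM x w \<subseteq> U"
        proof
          fix z assume zs: "z \<in> supp Hom actM x w"
          then obtain f where f: "f \<in> Hom z x" and nz: "actM z x f w \<noteq> 0" by (auto simp: supp_def)
          have pzx: "prec_eq Hom z x" by (rule supp_prec[OF km rM less.prems(3) zs])
          show "z \<in> U"
          proof (cases "prec_eq Hom x z")
            case True
            then show ?thesis using pzx unfolding U_def by blast
          next
            case False
            then have "prec Hom z x" using pzx by (simp add: prec_def)
            then obtain n :: nat and xs g h where
              gh: "\<forall>i<n. xs i \<in> X \<and> g i \<in> Hom z (xs i) \<and> h i \<in> Hom (xs i) x"
              and fe: "f = (\<Sum>i<n. cmp z (xs i) x (h i) (g i))"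
              using dec[OF _ f] by blast
            have cin: "\<forall>i<n. cmp z (xs i) x (h i) (g i) \<in> Hom z x"
              using gh km_cmp[OF km rM] by blast
            have "actM z x f w = (\<Sum>i<n. actM z x (cmp z (xs i) x (h i) (g i)) w)"
              using act_sum[OF km rM less.prems(3) cin] fe by simp
            also have "\<dots> = (\<Sum>i<n. actM z (xs i) (g i) (actM (xs i) x (h i) w))"
              using gh rm_comp[OF km rM _ _ less.prems(3)] by (intro sum.cong) auto
            finally have "(\<Sum>i<n. actM z (xs i) (g i) (actM (xs i) x (h i) w)) \<noteq> 0" using nz by simp
            then obtain i where i: "i < n" and nzi: "actM z (xs i) (g i) (actM (xs i) x (h i) w) \<noteq> 0"
              by (meson lessThan_iff sum.neutral)
            have zi: "z \<in> supp Hom actM (xs i) (actM (xs i) x (h i) w)"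
              using gh i nzi unfolding supp_def by blast
            have "h i \<in> module.span sE (B (xs i))" using gh i Bspan by blast
            then have "z \<in> (\<Union>b\<in>B (xs i). supp Hom actM (xs i) (actM (xs i) x b w))"
              using supp_span[OF km rM Bsub less.prems(3)] zi by blast
            then show ?thesis using gh i unfolding U_def by blast
          qed
        qed
        then show ?thesis using Ufin finite_subset by blast
      qed
    qed
    show "finite (supp Hom actM y m)"
      using claim[OF refl prec_eq_refl[OF km] m] unfolding T_def by blast
  qed
qed


theorem proposition6p7:
  fixes sE :: "'k::field \<Rightarrow> 'm::ab_group_add \<Rightarrow> 'm"
    and Hom :: "'o \<Rightarrow> 'o \<Rightarrow> 'm set"
    and cmp :: "'o \<Rightarrow> 'o \<Rightarrow> 'o \<Rightarrow> 'm \<Rightarrow> 'm \<Rightarrow> 'm"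
    and ide :: "'o \<Rightarrow> 'm"
    and sL :: "'k \<Rightarrow> 'l::ab_group_add \<Rightarrow> 'l" and Lc :: "'o \<Rightarrow> 'l set"
    and actL :: "'o \<Rightarrow> 'o \<Rightarrow> 'm \<Rightarrow> 'l \<Rightarrow> 'l"
    and sM :: "'k \<Rightarrow> 'v::ab_group_add \<Rightarrow> 'v" and Mc :: "'o \<Rightarrow> 'v set"
    and actM :: "'o \<Rightarrow> 'o \<Rightarrow> 'm \<Rightarrow> 'v \<Rightarrow> 'v"
    and sN :: "'k \<Rightarrow> 'n::ab_group_add \<Rightarrow> 'n" and Nc :: "'o \<Rightarrow> 'n set"
    and actN :: "'o \<Rightarrow> 'o \<Rightarrow> 'm \<Rightarrow> 'n \<Rightarrow> 'n"
    and \<alpha> :: "'o \<Rightarrow> 'l \<Rightarrow> 'v" and \<beta> :: "'o \<Rightarrow> 'v \<Rightarrow> 'n"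
  assumes "klin_cat sE Hom cmp ide"
    and "left_slf sE Hom cmp"
    and "right_module sE Hom cmp ide sL Lc actL"
    and "right_module sE Hom cmp ide sM Mc actM"
    and "right_module sE Hom cmp ide sN Nc actN"
    and "short_exact Hom sL Lc actL sM Mc actM sN Nc actN \<alpha> \<beta>"
    and "in_ess_image TYPE('a::ab_group_add) sE Hom cmp ide sL Lc actL"
    and "in_ess_image TYPE('b::ab_group_add) sE Hom cmp ide sN Nc actN"
  shows "in_ess_image TYPE('o \<Rightarrow> 'v) sE Hom cmp ide sM Mc actM"
proof -
  have lfL: "locfin Hom Lc actL" by (rule ess_locfin[OF assms(1) assms(3) assms(7)])
  have lfN: "locfin Hom Nc actN" by (rule ess_locfin[OF assms(1) assms(5) assms(8)])
  have lfM: "locfin Hom Mc actM"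
    by (rule ext_locfin[OF assms(1) assms(2) assms(3) assms(4) assms(5) assms(6) lfL lfN])
  show ?thesis by (rule locfin_ess[OF assms(1) assms(4) lfM])
qed

end
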